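(* Let $G$ be a context-free grammar, $k\ge0$, and $N$ its canonical LR($k$) NFA. Let $U_0,U_1,\dots,U_r$ be vertices of $N$ with $U_0$ the starting vertex and an edge $U_{i-1}\xrightarrow{\sigma_i}U_i$ for each $i$ (labels $\sigma_i\in\Sigma\cup\Lambda\cup\{\varepsilon\}$), and suppose $U_r$ has an action on a lookahead $\lambda\in\Gamma^k$. Let $\zeta=\zeta_1\cdots\zeta_m$ be the string of non-$\varepsilon$ labels among $\sigma_1,\dots,\sigma_r$. Suppose $x_1\cdots x_s\in\Sigma^*$ and $P_1,\dots,P_m$ are parse trees, $P_j$ having root $\zeta_j$ (a single leaf if $\zeta_j$ is terminal), whose yields concatenate to $x_1\cdots x_s$; let $\mathcal S_{\mathrm{part}}$ be the concatenation of the LR parses of $P_1,\dots,P_m$. Then there exist $x_{s+1}\cdots x_n\in\Sigma^*$ with $\mathrm{First}_k(x_{s+1}\cdots x_n\dashv^k)=\{\lambda\}$ and a parse tree of $x_1\cdots x_n$ with root $S$ whose LR parse $\mathcal S$ has $\mathcal S_{\mathrm{part}}$ as a prefix.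
   Context: $G$ has finite nonterminal set $\Lambda$, terminal set $\Sigma$, $\Gamma=\Sigma\cup\{\dashv\}$ with $\dashv$ an end marker, and start symbol $S$ which appears on the left of exactly one production $S\to\eta$ and on no right-hand side. For $T\subseteq(\Lambda\cup\Gamma)^*$, $\mathrm{Gen}(T)$ is the set of $y\in\Gamma^*$ with $x\Rightarrow^*y$ for some $x\in T$, and $\mathrm{First}_k(T)=\{x_1\cdots x_{\min(k,r)}: x_1\cdots x_r\in T\}$; concatenations involving sets are taken elementwise. A dotted production is $X\to\alpha\cdot\beta$ where $X\to\alpha\beta$ is a production. Forward-reachable $k$-follow strings: the least assignment of subsets of $\Gamma^k$ to productions such that $\dashv^k$ is assigned to $S\to\eta$, and whenever $\lambda$ is assigned to $X\to\alpha Y\beta$ then every $\mu\in\mathrm{First}_k(\mathrm{Gen}(\beta\lambda))$ is assigned to every production $Y\to\gamma$. For a dotted production $\hat\Pi$ with underlying production $\Pi$, $\mathcal U(\hat\Pi)$ is the set assigned to $\Pi$. Canonical LR($k$) NFA: vertices $(\hat\Pi,\lambda)$ with $\lambda\in\mathcal U(\hat\Pi)$; starting vertex $(S\to\cdot\,\eta,\dashv^k)$; $\varepsilon$-edges from $(X\to\alpha\cdot Y\beta,\lambda)$ to $(Y\to\cdot\,\gamma,\mu)$ whenever $\mu\in\mathrm{First}_k(\mathrm{Gen}(\beta\lambda))$; edges labeled $\tau\in\Lambda\cup\Sigma$ from $(X\to\alpha\cdot\tau\beta,\lambda)$ to $(X\to\alpha\tau\cdot\beta,\lambda)$. Actions: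 vertex $(X\to\alpha\,\cdot,\lambda)$ has action ``Reduce $X\to\alpha$'' on lookahead $\lambda$; vertex $(X\to\alpha\cdot\sigma\beta,\lambda)$ with $\sigma\in\Sigma$ has action ``Shift'' on each lookahead $\mu\in\mathrm{First}_k(\mathrm{Gen}(\sigma\beta\lambda))$; there are no other actions. LR parse of a parse tree $P$: the sequence of operations obtained by a postorder traversal of $P$, where a leaf labeled by a terminal $\sigma$ contributes $\mathrm{Shift}(\sigma)$ and an internal node expanded by production $\Pi$ contributes $\mathrm{Reduce}(\Pi)$ (after its children; a node for a production $X\to\varepsilon$ has no children). *)

theory Defs
  imports Main "HOL-Library.Sublist"
begin

text \<open>Symbols of (\<Lambda> \<union> \<Gamma>): nonterminals, terminals of \<Sigma>, and the end marker.\<close>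
datatype ('n, 't) sym = NT 'n | Tm 't | EndM

type_synonym ('n, 't) prod = "'n \<times> ('n, 't) sym list"

definition wf_grammar :: "('n, 't) prod set \<Rightarrow> 'n \<Rightarrow> bool" where
  "wf_grammar P S \<longleftrightarrow> finite P \<and> (\<exists>!\<eta>. (S, \<eta>) \<in> P) \<and>
     (\<forall>(A, \<gamma>) \<in> P. NT S \<notin> set \<gamma> \<and> EndM \<notin> set \<gamma>)"

definition step :: "('n, 't) prod set \<Rightarrow> ('n, 't) sym list \<Rightarrow> ('n, 't) sym list \<Rightarrow> bool" where
  "step P x y \<longleftrightarrow> (\<exists>u v A \<gamma>. (A, \<gamma>) \<in> P \<and> x = u @ [NT A] @ v \<and> y = u @ \<gamma> @ v)"

definition is_terminal_str :: "('n, 't) sym list \<Rightarrow> bool" where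
  "is_terminal_str y \<longleftrightarrow> (\<forall>s \<in> set y. \<forall>A. s \<noteq> NT A)"

definition Gen :: "('n, 't) prod set \<Rightarrow> ('n, 't) sym list set \<Rightarrow> ('n, 't) sym list set" where
  "Gen P T = {y. is_terminal_str y \<and> (\<exists>x \<in> T. (step P)\<^sup>*\<^sup>* x y)}"

definition First :: "nat \<Rightarrow> 'a list set \<Rightarrow> 'a list set" where
  "First k T = (\<lambda>x0. take k x0) ` T"

inductive follow :: "('n, 't) prod set \<Rightarrow> 'n \<Rightarrow> nat \<Rightarrow> ('n, 't) prod \<Rightarrow> ('n, 't) sym list \<Rightarrow> bool"
  for P S k where
  start: "(S, \<eta>) \<in> P \<Longrightarrow> follow P S k (S, \<eta>) (replicate k EndM)"
| propagate: "follow P S k (X, \<alpha> @ [NT Y] @ \<beta>) lam \<Longrightarrow> (Y, \<gamma>) \<in> P \<Longrightarrow>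
         \<mu> \<in> First k (Gen P {\<beta> @ lam}) \<Longrightarrow> follow P S k (Y, \<gamma>) \<mu>"

text \<open>Dotted production X \<rightarrow> \<alpha>\<cdot>\<beta> represented as (X, \<alpha>, \<beta>); vertices of the canonical NFA.\<close>
type_synonym ('n, 't) dprod = "'n \<times> ('n, 't) sym list \<times> ('n, 't) sym list"
type_synonym ('n, 't) vertex = "('n, 't) dprod \<times> ('n, 't) sym list"

definition is_vertex :: "('n, 't) prod set \<Rightarrow> 'n \<Rightarrow> nat \<Rightarrow> ('n, 't) vertex \<Rightarrow> bool" where
  "is_vertex P S k U \<longleftrightarrow> (case U of ((X, \<alpha>, \<beta>), lam) \<Rightarrow>
       (X, \<alpha> @ \<beta>) \<in> P \<and> follow P S k (X, \<alpha> @ \<beta>) lam)"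

definition start_vertex :: "('n, 't) prod set \<Rightarrow> 'n \<Rightarrow> nat \<Rightarrow> ('n, 't) vertex" where
  "start_vertex P S k = ((S, [], THE \<eta>. (S, \<eta>) \<in> P), replicate k EndM)"

text \<open>Edge labels: None = \<epsilon>, Some \<tau> with \<tau> \<in> \<Lambda> \<union> \<Sigma>.\<close>
definition nfa_edge :: "('n, 't) prod set \<Rightarrow> 'n \<Rightarrow> nat \<Rightarrow> ('n, 't) vertex \<Rightarrow>
    ('n, 't) sym option \<Rightarrow> ('n, 't) vertex \<Rightarrow> bool" where
  "nfa_edge P S k U l V \<longleftrightarrow> is_vertex P S k U \<and> is_vertex P S k V \<and>
     ((l = None \<and> (\<exists>X \<alpha> Y \<beta> lam \<gamma> \<mu>. U = ((X, \<alpha>, NT Y # \<beta>), lam) \<and> V = ((Y, [], \<gamma>), \<mu>) \<and>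
          \<mu> \<in> First k (Gen P {\<beta> @ lam}))) \<or>
      (\<exists>\<tau> X \<alpha> \<beta> lam. l = Some \<tau> \<and> \<tau> \<noteq> EndM \<and> U = ((X, \<alpha>, \<tau> # \<beta>), lam) \<and>
          V = ((X, \<alpha> @ [\<tau>], \<beta>), lam)))"

definition has_action :: "('n, 't) prod set \<Rightarrow> nat \<Rightarrow> ('n, 't) vertex \<Rightarrow> ('n, 't) sym list \<Rightarrow> bool" where
  "has_action P k U la \<longleftrightarrow>
     (\<exists>X \<alpha> lam. U = ((X, \<alpha>, []), lam) \<and> la = lam) \<or>
     (\<exists>X \<alpha> \<sigma> \<beta> lam. U = ((X, \<alpha>, Tm \<sigma> # \<beta>), lam) \<and> la \<in> First k (Gen P {Tm \<sigma> # \<beta> @ lam}))"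

datatype ('n, 't) ptree = Leaf 't | Node 'n "('n, 't) ptree list"

fun root :: "('n, 't) ptree \<Rightarrow> ('n, 't) sym" where
  "root (Leaf t) = Tm t"
| "root (Node A ts) = NT A"

fun valid_tree :: "('n, 't) prod set \<Rightarrow> ('n, 't) ptree \<Rightarrow> bool" where
  "valid_tree P (Leaf t) = True"
| "valid_tree P (Node A ts) = ((A, map root ts) \<in> P \<and> (\<forall>t \<in> set ts. valid_tree P t))"

fun yield :: "('n, 't) ptree \<Rightarrow> 't list" where
  "yield (Leaf t) = [t]"
| "yield (Node A ts) = concat (map yield ts)"

datatype ('n, 't) lr_op = Shift 't | Reduce "('n, 't) prod"

fun lr_parse :: "('n, 't) ptree \<Rightarrow> ('n, 't) lr_op list" where
  "lr_parse (Leaf t) = [Shift t]"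
| "lr_parse (Node A ts) = concat (map lr_parse ts) @ [Reduce (A, map root ts)]"

end

theory Submission
  imports Defs
begin

inductive gen :: "('n,'t) prod set \<Rightarrow> ('n,'t) sym list \<Rightarrow> ('n,'t) sym list \<Rightarrow> bool" for P where
  gnil: "gen P [] []"
| gt: "gen P x y \<Longrightarrow> (\<forall>A. a \<noteq> NT A) \<Longrightarrow> gen P (a#x) (a#y)"
| gnt: "(A,\<gamma>) \<in> P \<Longrightarrow> gen P \<gamma> w \<Longrightarrow> gen P x y \<Longrightarrow> gen P (NT A # x) (w @ y)"

lemma gen_app_D: "gen P (u@v) y \<Longrightarrow> \<exists>y1 y2. y = y1@y2 \<and> gen P u y1 \<and> gen P v y2"
proof (induction u arbitrary: y)
  case Nil
  show ?case using gnil Nil.prems by (intro exI[of _ "[]"] exI[of _ y]) simp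
next
  case (Cons a u)
  from Cons.prems show ?case
  proof cases
    case gnil then show ?thesis by simp
  next
    case (gt x' y' a')
    have e: "x' = u@v" "a' = a" using gt(1) by simp_all
    obtain y1 y2 where h: "y' = y1@y2" "gen P u y1" "gen P v y2" using Cons.IH[of y'] gt(3) e(1) by blast
    have "gen P (a#u) (a#y1)" using gen.gt[OF h(2)] gt(4) e(2) by simp
    moreover have "y = (a#y1) @ y2" using gt(2) h(1) e(2) by simp
    ultimately show ?thesis using h(3) by (intro exI conjI)
  next
    case (gnt A \<gamma> w x' y')
    have e: "x' = u@v" "a = NT A" using gnt(1) by simp_all
    obtain y1 y2 where h: "y' = y1@y2" "gen P u y1" "gen P v y2" using Cons.IH[of y'] gnt(5) e(1) by blast
    have "gen P (a#u) (w@y1)" using gen.gnt[OF gnt(3) gnt(4) h(2)] e(2) by simp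
    moreover have "y = (w@y1) @ y2" using gnt(2) h(1) by simp
    ultimately show ?thesis using h(3) by (intro exI conjI)
  qed
qed

lemma gen_app_I: "gen P u y1 \<Longrightarrow> gen P v y2 \<Longrightarrow> gen P (u@v) (y1@y2)"
  by (induction rule: gen.induct) (auto intro: gen.intros)

lemma gen_refl: "is_terminal_str y \<Longrightarrow> gen P y y"
  by (induction y) (auto simp: is_terminal_str_def intro: gen.intros)

lemma gen_term_eq: "gen P x y \<Longrightarrow> is_terminal_str x \<Longrightarrow> y = x"
  by (induction rule: gen.induct) (auto simp: is_terminal_str_def)

lemma gen_step: "step P x x' \<Longrightarrow> gen P x' y \<Longrightarrow> gen P x y"
proof -
  assume st: "step P x x'" and g: "gen P x' y"
  then obtain u v A \<gamma> where p: "(A, \<gamma>) \<in> P" "x = u @ [NT A] @ v" "x' = u @ \<gamma> @ v"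
    unfolding step_def by blast
  obtain y1 y' where a1: "y = y1 @ y'" and a2: "gen P u y1" and a3: "gen P (\<gamma>@v) y'"
    using gen_app_D[of P u "\<gamma>@v" y] g p(3) by blast
  obtain y2 y3 where b1: "y' = y2 @ y3" and b2: "gen P \<gamma> y2" and b3: "gen P v y3"
    using gen_app_D[OF a3] by blast
  have c: "gen P (NT A # v) (y2 @ y3)" using gen.gnt[OF p(1) b2 b3] .
  have "gen P (u @ (NT A # v)) (y1 @ (y2 @ y3))" using gen_app_I[OF a2 c] .
  then show ?thesis using p(2) a1 b1 by simp
qed

lemma rt_gen: "(step P)\<^sup>*\<^sup>* x y \<Longrightarrow> is_terminal_str y \<Longrightarrow> gen P x y"
  by (induction rule: converse_rtranclp_induct) (auto intro: gen_refl gen_step)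

lemma Gen_gen: "y \<in> Gen P {x} \<Longrightarrow> gen P x y \<and> is_terminal_str y"
  unfolding Gen_def using rt_gen by blast

lemma gen_trees: "gen P x y \<Longrightarrow> EndM \<notin> set x \<Longrightarrow> (\<forall>(A,\<gamma>)\<in>P. EndM \<notin> set \<gamma>) \<Longrightarrow>
   \<exists>R. (\<forall>t\<in>set R. valid_tree P t) \<and> map root R = x \<and> y = map Tm (concat (map yield R))"
proof (induction rule: gen.induct)
  case gnil then show ?case by simp
next
  case (gt x y a)
  then obtain R where R: "(\<forall>t\<in>set R. valid_tree P t) \<and> map root R = x \<and> y = map Tm (concat (map yield R))" by auto
  from gt obtain t where "a = Tm t" by (cases a) auto
  then show ?case using R by (intro exI[of _ "Leaf t # R"]) auto
next
  case (gnt A \<gamma> w x y)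
  then have "EndM \<notin> set \<gamma>" by auto
  with gnt obtain R1 where R1: "(\<forall>t\<in>set R1. valid_tree P t) \<and> map root R1 = \<gamma> \<and> w = map Tm (concat (map yield R1))" by auto
  from gnt obtain R where R: "(\<forall>t\<in>set R. valid_tree P t) \<and> map root R = x \<and> y = map Tm (concat (map yield R))" by auto
  show ?case using R R1 gnt(1) by (intro exI[of _ "Node A R1 # R"]) auto
qed

lemma follow_term: "follow P S k p lam \<Longrightarrow> is_terminal_str lam"
proof (induction rule: follow.induct)
  case (start \<eta>) then show ?case by (auto simp: is_terminal_str_def)
next
  case (propagate X \<alpha> Y \<beta> lam \<gamma> \<mu>)
  then obtain y where "y \<in> Gen P {\<beta> @ lam}" "\<mu> = take k y" by (auto simp: First_def)
  moreover have "is_terminal_str y" using Gen_gen calculation(1) by blast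
  ultimately show ?case by (auto simp: is_terminal_str_def dest: in_set_takeD)
qed

lemma take_take_app: "take k (a @ b) = take k (a @ take k b)"
  by (simp add: take_append min_def)


definition Pr :: "('n,'t) prod set \<Rightarrow> 'n \<Rightarrow> nat \<Rightarrow> ('n,'t) vertex \<Rightarrow> ('n,'t) ptree list \<Rightarrow> bool" where
"Pr P S k U Q \<longleftrightarrow> (\<forall>R. (\<forall>t\<in>set R. valid_tree P t) \<longrightarrow> map root R = snd (snd (fst U)) \<longrightarrow>
   (\<exists>ys tr. take k (map Tm ys @ replicate k EndM) = snd U \<and> valid_tree P tr \<and> root tr = NT S \<and>
      yield tr = concat (map yield Q) @ concat (map yield R) @ ys \<and>
      prefix (concat (map lr_parse Q) @ concat (map lr_parse R)) (lr_parse tr)))"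

lemma wf_start: assumes "wf_grammar P S" shows "(S, THE \<eta>. (S,\<eta>) \<in> P) \<in> P"
proof -
  from assms have "\<exists>!\<eta>. (S,\<eta>) \<in> P" unfolding wf_grammar_def by (elim conjE)
  then have "(S, THE \<eta>. (S,\<eta>) \<in> P) \<in> P" by (rule theI')
  then show ?thesis .
qed

lemma Pr_base: assumes "wf_grammar P S" shows "Pr P S k (start_vertex P S k) []"
  unfolding Pr_def start_vertex_def
proof (intro allI impI)
  fix R :: "('a,'b) ptree list"
  assume "\<forall>t\<in>set R. valid_tree P t" "map root R = snd (snd (fst ((S, [], THE \<eta>. (S, \<eta>) \<in> P), replicate k EndM)))"
  then show "\<exists>ys tr. take k (map Tm ys @ replicate k EndM) = snd ((S, [], THE \<eta>. (S, \<eta>) \<in> P), replicate k EndM) \<and>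
              valid_tree P tr \<and> root tr = NT S \<and> yield tr = concat (map yield []) @ concat (map yield R) @ ys \<and>
              prefix (concat (map lr_parse []) @ concat (map lr_parse R)) (lr_parse tr)"
    using wf_start[OF assms] by (intro exI[of _ "[]"] exI[of _ "Node S R"]) auto
qed

lemma Pr_shift: assumes "Pr P S k ((X,\<alpha>,\<tau>#\<beta>),lam) Q" "root T = \<tau>" "valid_tree P T"
  shows "Pr P S k ((X,\<alpha>@[\<tau>],\<beta>),lam) (Q@[T])"
  unfolding Pr_def
proof (intro allI impI)
  fix R assume R: "\<forall>t\<in>set R. valid_tree P t" "map root R = snd (snd (fst ((X, \<alpha> @ [\<tau>], \<beta>), lam)))"
  with assms have "\<exists>ys tr. take k (map Tm ys @ replicate k EndM) = lam \<and> valid_tree P tr \<and> root tr = NT S \<and>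
      yield tr = concat (map yield Q) @ concat (map yield (T#R)) @ ys \<and>
      prefix (concat (map lr_parse Q) @ concat (map lr_parse (T#R))) (lr_parse tr)"
    unfolding Pr_def by (elim allE[of _ "T#R"]) auto
  then show "\<exists>ys tr. take k (map Tm ys @ replicate k EndM) = snd ((X, \<alpha> @ [\<tau>], \<beta>), lam) \<and>
              valid_tree P tr \<and> root tr = NT S \<and> yield tr = concat (map yield (Q @ [T])) @ concat (map yield R) @ ys \<and>
              prefix (concat (map lr_parse (Q @ [T])) @ concat (map lr_parse R)) (lr_parse tr)"
    by simp
qed

lemma Gen_split: assumes "y \<in> Gen P {\<beta> @ lam}" "is_terminal_str lam" "EndM \<notin> set \<beta>"
   "\<forall>(A,\<gamma>)\<in>P. EndM \<notin> set \<gamma>"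
 shows "\<exists>R. (\<forall>t\<in>set R. valid_tree P t) \<and> map root R = \<beta> \<and> y = map Tm (concat (map yield R)) @ lam"
proof -
  from Gen_gen[OF assms(1)] have "gen P (\<beta>@lam) y" by blast
  then obtain y1 y2 where "y = y1@y2" "gen P \<beta> y1" "gen P lam y2" using gen_app_D by blast
  moreover have "y2 = lam" using gen_term_eq calculation(3) assms(2) by blast
  moreover obtain R where "(\<forall>t\<in>set R. valid_tree P t) \<and> map root R = \<beta> \<and> y1 = map Tm (concat (map yield R))"
    using gen_trees[OF calculation(2) assms(3,4)] by blast
  ultimately show ?thesis by (intro exI[of _ R]) auto
qed

lemma Pr_eps: assumes "Pr P S k ((X,\<alpha>,NT Y#\<beta>),lam) Q" "(Y,\<gamma>) \<in> P" "\<mu> \<in> First k (Gen P {\<beta>@lam})"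
  "is_terminal_str lam" "EndM \<notin> set \<beta>" "\<forall>(A,\<gamma>)\<in>P. EndM \<notin> set \<gamma>"
  shows "Pr P S k ((Y,[],\<gamma>),\<mu>) Q"
  unfolding Pr_def
proof (intro allI impI)
  from assms(3) obtain y where y: "y \<in> Gen P {\<beta>@lam}" "\<mu> = take k y" by (auto simp: First_def)
  then obtain R2 where R2: "(\<forall>t\<in>set R2. valid_tree P t)" "map root R2 = \<beta>"
     "y = map Tm (concat (map yield R2)) @ lam"
    using Gen_split assms(4,5,6) by blast
  fix R assume R: "\<forall>t\<in>set R. valid_tree P t" "map root R = snd (snd (fst ((Y, [], \<gamma>), \<mu>)))"
  then have "\<forall>t\<in>set (Node Y R # R2). valid_tree P t" "map root (Node Y R # R2) = NT Y # \<beta>"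
    using R2 assms(2) by auto
  with assms(1) obtain ys tr where yt: "take k (map Tm ys @ replicate k EndM) = lam" "valid_tree P tr" "root tr = NT S"
     "yield tr = concat (map yield Q) @ concat (map yield (Node Y R # R2)) @ ys"
     "prefix (concat (map lr_parse Q) @ concat (map lr_parse (Node Y R # R2))) (lr_parse tr)"
    unfolding Pr_def by (elim allE[of _ "Node Y R # R2"]) auto
  have "take k (map Tm (concat (map yield R2) @ ys) @ replicate k EndM)
      = take k (map Tm (concat (map yield R2)) @ (map Tm ys @ replicate k EndM))" by simp
  also have "\<dots> = take k (map Tm (concat (map yield R2)) @ take k (map Tm ys @ replicate k EndM))"
    by (rule take_take_app)
  also have "\<dots> = take k y" by (simp only: yt(1) R2(3))
  finally have "take k (map Tm (concat (map yield R2) @ ys) @ replicate k EndM) = \<mu>" using y(2) by simp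
  moreover have "prefix (concat (map lr_parse Q) @ concat (map lr_parse R)) (lr_parse tr)"
  proof -
    have "prefix (concat (map lr_parse Q) @ concat (map lr_parse R))
       (concat (map lr_parse Q) @ concat (map lr_parse (Node Y R # R2)))"
      by (rule prefixI[of _ _ "Reduce (Y, map root R) # concat (map lr_parse R2)"]) simp
    then show ?thesis using yt(5) by (rule prefix_order.trans)
  qed
  ultimately show "\<exists>ys tr. take k (map Tm ys @ replicate k EndM) = snd ((Y, [], \<gamma>), \<mu>) \<and>
              valid_tree P tr \<and> root tr = NT S \<and> yield tr = concat (map yield Q) @ concat (map yield R) @ ys \<and>
              prefix (concat (map lr_parse Q) @ concat (map lr_parse R)) (lr_parse tr)"
    using yt by (intro exI[of _ "concat (map yield R2) @ ys"] exI[of _ tr]) auto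
qed

lemma filter_nth_take: assumes "n < length ls" "f (ls!n)"
  shows "filter f ls ! length (filter f (take n ls)) = ls!n \<and> length (filter f (take n ls)) < length (filter f ls)"
proof -
  have "ls = take n ls @ ls!n # drop (Suc n) ls" using assms(1) by (simp add: id_take_nth_drop)
  then have eq: "filter f ls = filter f (take n ls) @ ls!n # filter f (drop (Suc n) ls)"
  proof -
    have "filter f ls = filter f (take n ls @ ls!n # drop (Suc n) ls)"
      using \<open>ls = _\<close> by (rule arg_cong)
    then show ?thesis using assms(2) by simp
  qed
  have "filter f ls ! length (filter f (take n ls)) = ls!n" by (subst eq) (simp add: nth_append)
  moreover have "length (filter f (take n ls)) < length (filter f ls)" by (subst eq) simp
  ultimately show ?thesis by blast
qed

lemma Pr_final: assumes "Pr P S k ((X,\<alpha>,\<beta>),lam) Q" "la \<in> First k (Gen P {\<beta>@lam})"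
  "is_terminal_str lam" "EndM \<notin> set \<beta>" "\<forall>(A,\<gamma>)\<in>P. EndM \<notin> set \<gamma>"
  shows "\<exists>ys tr. take k (map Tm ys @ replicate k EndM) = la \<and> valid_tree P tr \<and> root tr = NT S \<and>
      yield tr = concat (map yield Q) @ ys \<and> prefix (concat (map lr_parse Q)) (lr_parse tr)"
proof -
  from assms(2) obtain y where y: "y \<in> Gen P {\<beta>@lam}" "la = take k y" by (auto simp: First_def)
  then obtain R where R: "(\<forall>t\<in>set R. valid_tree P t)" "map root R = \<beta>"
     "y = map Tm (concat (map yield R)) @ lam"
    using Gen_split assms(3,4,5) by blast
  with assms(1) obtain ys tr where yt: "take k (map Tm ys @ replicate k EndM) = lam" "valid_tree P tr" "root tr = NT S"
     "yield tr = concat (map yield Q) @ concat (map yield R) @ ys"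
     "prefix (concat (map lr_parse Q) @ concat (map lr_parse R)) (lr_parse tr)"
    unfolding Pr_def by (elim allE[of _ R]) auto
  have "take k (map Tm (concat (map yield R) @ ys) @ replicate k EndM)
      = take k (map Tm (concat (map yield R)) @ (map Tm ys @ replicate k EndM))" by simp
  also have "\<dots> = take k (map Tm (concat (map yield R)) @ take k (map Tm ys @ replicate k EndM))"
    by (rule take_take_app)
  also have "\<dots> = take k y" by (simp only: yt(1) R(3))
  finally have "take k (map Tm (concat (map yield R) @ ys) @ replicate k EndM) = la" using y(2) by simp
  moreover have "prefix (concat (map lr_parse Q)) (lr_parse tr)"
  proof -
    have "prefix (concat (map lr_parse Q)) (concat (map lr_parse Q) @ concat (map lr_parse R))"
      by (rule prefixI[of _ _ "concat (map lr_parse R)"]) simp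
    then show ?thesis using yt(5) by (rule prefix_order.trans)
  qed
  ultimately show ?thesis
    using yt by (intro exI[of _ "concat (map yield R) @ ys"] exI[of _ tr]) auto
qed

theorem mainTheorem13:
  fixes P :: "('n, 't) prod set" and S :: 'n and k :: nat
    and us :: "('n, 't) vertex list" and ls :: "('n, 't) sym option list"
    and la :: "('n, 't) sym list" and xs :: "'t list" and Ps :: "('n, 't) ptree list"
  assumes wf: "wf_grammar P S"
    and len: "length us = length ls + 1"
    and start: "us ! 0 = start_vertex P S k"
    and edges: "\<forall>i < length ls. nfa_edge P S k (us ! i) (ls ! i) (us ! (i + 1))"
    and act: "has_action P k (last us) la"
    and la_len: "length la = k" and la_gamma: "\<forall>s \<in> set la. \<forall>A. s \<noteq> NT A"
    and Ps_len: "length Ps = length (map the (filter (\<lambda>l. l \<noteq> None) ls))"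
    and Ps_root: "\<forall>j < length Ps. root (Ps ! j) = map the (filter (\<lambda>l. l \<noteq> None) ls) ! j"
    and Ps_valid: "\<forall>j < length Ps. valid_tree P (Ps ! j)"
    and Ps_yield: "concat (map yield Ps) = xs"
  shows "\<exists>ys tr. First k {map Tm ys @ replicate k EndM} = {la} \<and>
           valid_tree P tr \<and> root tr = NT S \<and> yield tr = xs @ ys \<and>
           prefix (concat (map lr_parse Ps)) (lr_parse tr)"
proof -
  have noE: "\<forall>(A,\<gamma>)\<in>P. EndM \<notin> set \<gamma>" using wf unfolding wf_grammar_def by blast
  define c where "c n = length (filter (\<lambda>l. l \<noteq> None) (take n ls))" for n
  have vert: "(X, \<alpha>@\<beta>) \<in> P \<and> is_terminal_str lam"
    if "n \<le> length ls" "us ! n = ((X,\<alpha>,\<beta>),lam)" for n X \<alpha> \<beta> lam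
  proof (cases n)
    case 0
    then show ?thesis using that start wf_start[OF wf]
      by (auto simp: start_vertex_def is_terminal_str_def)
  next
    case (Suc m)
    then have "is_vertex P S k (us ! n)" using edges that(1) unfolding nfa_edge_def by auto
    then show ?thesis using that(2) follow_term unfolding is_vertex_def by auto
  qed
  have inv: "n \<le> length ls \<Longrightarrow> Pr P S k (us!n) (take (c n) Ps)" for n
  proof (induction n)
    case 0
    then show ?case using Pr_base[OF wf] start by (simp add: c_def)
  next
    case (Suc n)
    then have nl: "n < length ls" by simp
    have IH: "Pr P S k (us!n) (take (c n) Ps)" using Suc by simp
    have E: "nfa_edge P S k (us ! n) (ls ! n) (us ! Suc n)" using edges nl by auto
    have cS: "c (Suc n) = c n + (if ls!n = None then 0 else 1)"
      using nl by (simp add: c_def take_Suc_conv_app_nth)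
    from E consider
      (eps) X \<alpha> Y \<beta> lam \<gamma> \<mu> where "ls!n = None" "us!n = ((X, \<alpha>, NT Y # \<beta>), lam)"
          "us ! Suc n = ((Y, [], \<gamma>), \<mu>)" "\<mu> \<in> First k (Gen P {\<beta> @ lam})" "is_vertex P S k (us ! Suc n)"
    | (sh) \<tau> X \<alpha> \<beta> lam where "ls!n = Some \<tau>" "us!n = ((X, \<alpha>, \<tau> # \<beta>), lam)"
          "us ! Suc n = ((X, \<alpha> @ [\<tau>], \<beta>), lam)"
      unfolding nfa_edge_def by blast
    then show ?case
    proof cases
      case eps
      have "(X, \<alpha> @ NT Y # \<beta>) \<in> P \<and> is_terminal_str lam" using vert[of n] eps nl by auto
      then have "EndM \<notin> set \<beta>" "is_terminal_str lam" using noE by auto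
      moreover have "(Y, \<gamma>) \<in> P" using eps(3,5) unfolding is_vertex_def by auto
      ultimately have "Pr P S k (us ! Suc n) (take (c n) Ps)"
        using Pr_eps[of P S k X \<alpha> Y \<beta> lam "take (c n) Ps" \<gamma> \<mu>] IH eps noE by simp
      then show ?thesis using cS eps by simp
    next
      case sh
      have f: "filter (\<lambda>l. l \<noteq> None) ls ! c n = ls!n \<and> c n < length (filter (\<lambda>l. l \<noteq> None) ls)"
        unfolding c_def using filter_nth_take[of n ls "\<lambda>l. l \<noteq> None"] nl sh by auto
      then have cl: "c n < length Ps" using Ps_len by simp
      have "root (Ps ! c n) = \<tau>" using Ps_root cl f sh by auto
      moreover have "valid_tree P (Ps ! c n)" using Ps_valid cl by auto
      ultimately have "Pr P S k (us ! Suc n) (take (c n) Ps @ [Ps ! c n])"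
        using Pr_shift[of P S k X \<alpha> \<tau> \<beta> lam "take (c n) Ps"] IH sh by simp
      then show ?thesis using cS sh cl by (simp add: take_Suc_conv_app_nth)
    qed
  qed
  have lu: "last us = us ! length ls" using len by (subst last_conv_nth) auto
  obtain X \<alpha> \<beta> lam where U: "us ! length ls = ((X,\<alpha>,\<beta>),lam)" by (metis prod.exhaust)
  have cl: "c (length ls) = length Ps" using Ps_len by (simp add: c_def)
  have Pr: "Pr P S k ((X,\<alpha>,\<beta>),lam) Ps" using inv[of "length ls"] U cl by simp
  have vt: "(X, \<alpha>@\<beta>) \<in> P \<and> is_terminal_str lam" using vert[of "length ls"] U by simp
  then have nb: "EndM \<notin> set \<beta>" "is_terminal_str lam" using noE by auto
  have laF: "la \<in> First k (Gen P {\<beta>@lam})"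
    using act unfolding has_action_def lu U
  proof (elim disjE exE conjE)
    fix X' \<alpha>' lam' assume h: "((X, \<alpha>, \<beta>), lam) = ((X', \<alpha>', []), lam')" "la = lam'"
    then have "la \<in> Gen P {\<beta>@lam}" using la_gamma unfolding Gen_def is_terminal_str_def by auto
    then show ?thesis using la_len unfolding First_def by force
  next
    fix X' \<alpha>' \<sigma> \<beta>' lam' assume "((X, \<alpha>, \<beta>), lam) = ((X', \<alpha>', Tm \<sigma> # \<beta>'), lam')"
      "la \<in> First k (Gen P {Tm \<sigma> # \<beta>' @ lam'})"
    then show ?thesis by simp
  qed
  obtain ys tr where r: "take k (map Tm ys @ replicate k EndM) = la" "valid_tree P tr" "root tr = NT S"
      "yield tr = concat (map yield Ps) @ ys" "prefix (concat (map lr_parse Ps)) (lr_parse tr)"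
    using Pr_final[OF Pr laF nb(2) nb(1) noE] by blast
  show ?thesis using r Ps_yield by (intro exI[of _ ys] exI[of _ tr]) (auto simp: First_def)
qed

end
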